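(* Consider the following random construction (the graph gamma process). Let $(\rho_i)_{i\ge 1}$ be the atom weights of a gamma process with mass parameter $\gamma_{0,\rho}>0$ and rate $c_\rho>0$ (i.e. the points of a Poisson process on $(0,\infty)$ with intensity $\gamma_{0,\rho}\rho^{-1}e^{-c_\rho\rho}\,d\rho$), and let $(\tau_i)_{i\ge1}$ be positive weights attached to the same countably many nodes $i$, distributed as the atom weights of a gamma process with mass parameter $\gamma_{0,\tau}>0$ and rate $c_\tau>0$. Given these, for a community index $\kappa$ with activation strength $r_\kappa>0$, draw independently for all nodes $i,j\ge 1$ $$\theta_{i\kappa}\sim\mathrm{Gamma}(\rho_i,1/e),\qquad \psi_{j\kappa}\sim\mathrm{Gamma}(\tau_j,1/f),$$ with constants $e,f>0$ (Gamma$(a,s)$ denotes shape $a$, scale $s$), and then independently $$z_{ij\kappa}\sim\mathrm{Bernoulli}\big(1-e^{-r_\kappa\theta_{i\kappa}\psi_{j\kappa}}\big),\quad i,j\ge1.$$ Then the number of edges of community $\kappa$, namely $\sum_{i=1}^\infty\sum_{j=1}^\infty z_{ij\kappa}$, is finite (almost surely).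
   Context: The binary array $(z_{ij\kappa})_{i,j}$ is interpreted as the adjacency matrix of a directed graph on countably infinitely many nodes, with $z_{ij\kappa}=1$ meaning community $\kappa$ places an edge from node $j$ to node $i$. *)

theory Defs
  imports "HOL-Probability.Probability"
begin

definition gamma_density :: "real \<Rightarrow> real \<Rightarrow> real \<Rightarrow> real" where
  "gamma_density a s x =
     (if 0 < x then x powr (a - 1) * exp (- x / s) / (Gamma a * s powr a) else 0)"

definition gamma_measure :: "real \<Rightarrow> real \<Rightarrow> real measure" where
  "gamma_measure a s = density lborel (\<lambda>x. ennreal (gamma_density a s x))"

definition gamma_levy_intensity :: "real \<Rightarrow> real \<Rightarrow> real set \<Rightarrow> ennreal" where
  "gamma_levy_intensity g0 c A =
     (\<integral>\<^sup>+ x \<in> A. ennreal (if 0 < x then g0 / x * exp (- c * x) else 0) \<partial>lborel)"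

definition poisson_prob :: "real \<Rightarrow> nat \<Rightarrow> real" where
  "poisson_prob m k = m ^ k / fact k * exp (- m)"

text \<open>P is the law of (an enumeration of) the atoms of a Poisson point process on (0,inf)
  with intensity measure nu: the atoms are distinct and positive, and for every finite
  family of pairwise disjoint Borel sets of finite intensity the atom counts are jointly
  distributed as independent Poisson variables with means nu(A_k).\<close>
definition poisson_process_law :: "(real set \<Rightarrow> ennreal) \<Rightarrow> (nat \<Rightarrow> real) measure \<Rightarrow> bool" where
  "poisson_process_law \<nu> P \<longleftrightarrow>
     prob_space P \<and>
     sets P = sets (PiM UNIV (\<lambda>_. borel)) \<and>
     (AE \<rho> in P. inj \<rho> \<and> (\<forall>i. 0 < \<rho> i)) \<and>
     (\<forall>(n::nat) (A :: nat \<Rightarrow> real set) (m :: nat \<Rightarrow> nat).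
        (\<forall>k<n. A k \<in> sets borel \<and> A k \<subseteq> {0<..} \<and> \<nu> (A k) < \<infinity>) \<longrightarrow>
        disjoint_family_on A {..<n} \<longrightarrow>
        measure P {\<rho> \<in> space P. \<forall>k<n. finite {i. \<rho> i \<in> A k} \<and> card {i. \<rho> i \<in> A k} = m k}
          = (\<Prod>k<n. poisson_prob (enn2real (\<nu> (A k))) (m k)))"

definition gamma_process_law :: "real \<Rightarrow> real \<Rightarrow> (nat \<Rightarrow> real) measure \<Rightarrow> bool" where
  "gamma_process_law g0 c P \<longleftrightarrow> poisson_process_law (gamma_levy_intensity g0 c) P"

end

theory Submission
  imports Defs "HOL-Library.Nat_Bijection"
begin

lemma gamma_int_aux:
  fixes b s :: real assumes b: "0 < b" and s: "0 < s"
  shows "(\<integral>\<^sup>+x. ennreal (indicator {0<..} x * x powr (b - 1) * exp (- x / s)) \<partial>lborel)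
         = ennreal (Gamma b * s powr b)"
proof -
  define g where "g t = ennreal (indicator {0..} t * t powr (b - 1) / exp t)" for t :: real
  have gm[measurable]: "g \<in> borel_measurable borel" unfolding g_def by measurable
  have "ennreal (Gamma b) = (\<integral>\<^sup>+t. g t \<partial>lborel)"
    using Gamma_conv_nn_integral_real[OF b] Gamma_real_pos[OF b] unfolding g_def by simp
  also have "\<dots> = \<bar>1/s\<bar> * (\<integral>\<^sup>+x. g (0 + (1/s) * x) \<partial>lborel)"
    by (rule nn_integral_real_affine) (use s in auto)
  also have "(\<integral>\<^sup>+x. g (0 + (1/s) * x) \<partial>lborel) =
      (\<integral>\<^sup>+x. ennreal (s powr (1 - b)) * ennreal (indicator {0<..} x * x powr (b - 1) * exp (- x / s)) \<partial>lborel)"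
  proof (rule nn_integral_cong)
    fix x :: real
    show "g (0 + (1/s) * x) = ennreal (s powr (1 - b)) * ennreal (indicator {0<..} x * x powr (b - 1) * exp (- x / s))"
    proof (cases "0 < x")
      case True
      have "(x / s) powr (b - 1) = x powr (b - 1) * s powr (1 - b)"
      proof -
        have "(x / s) powr (b - 1) = x powr (b - 1) / s powr (b - 1)"
          using True s by (simp add: powr_divide)
        moreover have "s powr (1 - b) = inverse (s powr (b - 1))"
          using powr_minus[of s "b - 1"] by simp
        ultimately show ?thesis by (simp add: divide_inverse)
      qed
      moreover have "1 / exp (x / s) = exp (- x / s)" by (simp add: exp_minus field_simps)
      ultimately show ?thesis using True s unfolding g_def
        by (simp add: ennreal_mult'[symmetric] field_simps)
    next
      case False
      then show ?thesis unfolding g_def using s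
        by (cases "x = 0") (auto simp: indicator_def zero_le_divide_iff divide_nonneg_pos)
    qed
  qed
  also have "\<dots> = ennreal (s powr (1 - b)) * (\<integral>\<^sup>+x. ennreal (indicator {0<..} x * x powr (b - 1) * exp (- x / s)) \<partial>lborel)"
    by (rule nn_integral_cmult) measurable
  finally have eq: "ennreal (Gamma b) = ennreal (1/s) * ennreal (s powr (1 - b)) * (\<integral>\<^sup>+x. ennreal (indicator {0<..} x * x powr (b - 1) * exp (- x / s)) \<partial>lborel)"
    using s by (simp add: mult.assoc)
  have "ennreal (1/s) * ennreal (s powr (1 - b)) = ennreal (s powr (- b))"
    using s by (simp add: ennreal_mult'[symmetric] powr_diff powr_minus field_simps)
  with eq have eq2: "ennreal (Gamma b) = ennreal (s powr (- b)) * (\<integral>\<^sup>+x. ennreal (indicator {0<..} x * x powr (b - 1) * exp (- x / s)) \<partial>lborel)"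
    by simp
  have "ennreal (s powr b) * ennreal (Gamma b) = ennreal (s powr b) * ennreal (s powr (- b)) * (\<integral>\<^sup>+x. ennreal (indicator {0<..} x * x powr (b - 1) * exp (- x / s)) \<partial>lborel)"
    by (subst eq2) (simp add: mult.assoc)
  also have "ennreal (s powr b) * ennreal (s powr (- b)) = 1"
    using s by (simp add: ennreal_mult'[symmetric] powr_add[symmetric])
  finally show ?thesis
    using s Gamma_real_pos[OF b] by (simp add: ennreal_mult'[symmetric] mult.commute)
qed

lemma sets_gamma_measure[measurable_cong, simp]: "sets (gamma_measure a s) = sets borel"
  by (simp add: gamma_measure_def)

lemma space_gamma_measure[simp]: "space (gamma_measure a s) = UNIV"
  by (simp add: gamma_measure_def)

lemma gamma_density_measurable[measurable]: "gamma_density a s \<in> borel_measurable borel"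
  unfolding gamma_density_def by measurable

lemma gamma_moments:
  fixes a s :: real assumes a: "0 < a" and s: "0 < s"
  shows "prob_space (gamma_measure a s)"
    and "(\<integral>\<^sup>+x. ennreal x \<partial>gamma_measure a s) = ennreal (a * s)"
    and "AE x in gamma_measure a s. 0 < x"
proof -
  define C where "C = Gamma a * s powr a"
  have C: "0 < C" unfolding C_def using a s Gamma_real_pos[OF a] by simp
  have dens: "gamma_density a s x = indicator {0<..} x * x powr (a - 1) * exp (- x / s) / C" for x
    unfolding gamma_density_def C_def by (auto simp: indicator_def)
  have "(\<integral>\<^sup>+x. ennreal (gamma_density a s x) \<partial>lborel)
      = (\<integral>\<^sup>+x. ennreal (1 / C) * ennreal (indicator {0<..} x * x powr (a - 1) * exp (- x / s)) \<partial>lborel)"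
    using C by (intro nn_integral_cong) (simp add: dens ennreal_mult'[symmetric] divide_nonneg_pos)
  also have "\<dots> = ennreal (1 / C) * ennreal C"
    using gamma_int_aux[OF a s] by (subst nn_integral_cmult) (simp_all add: C_def)
  also have "\<dots> = 1" using C by (simp add: ennreal_mult'[symmetric])
  finally have one: "(\<integral>\<^sup>+x. ennreal (gamma_density a s x) \<partial>lborel) = 1" .
  show "prob_space (gamma_measure a s)"
    unfolding gamma_measure_def
    by (rule prob_spaceI) (simp add: emeasure_density one)
  have "(\<integral>\<^sup>+x. ennreal x \<partial>gamma_measure a s) = (\<integral>\<^sup>+x. ennreal (gamma_density a s x) * ennreal x \<partial>lborel)"
    unfolding gamma_measure_def by (subst nn_integral_density) auto
  also have "\<dots> = (\<integral>\<^sup>+x. ennreal (1 / C) * ennreal (indicator {0<..} x * x powr ((a + 1) - 1) * exp (- x / s)) \<partial>lborel)"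
  proof (intro nn_integral_cong)
    fix x :: real
    show "ennreal (gamma_density a s x) * ennreal x = ennreal (1 / C) * ennreal (indicator {0<..} x * x powr ((a + 1) - 1) * exp (- x / s))"
    proof (cases "0 < x")
      case True
      have "x powr (a - 1) * x = x powr ((a + 1) - 1)" using True
        by (simp add: powr_add[symmetric] powr_diff)
      then show ?thesis using True C
        by (simp add: dens ennreal_mult'[symmetric] divide_nonneg_pos ennreal_mult''[symmetric])
    next
      case False then show ?thesis by (simp add: dens)
    qed
  qed
  also have "\<dots> = ennreal (1 / C) * ennreal (Gamma (a + 1) * s powr (a + 1))"
    using a gamma_int_aux[of "a+1" s] s by (subst nn_integral_cmult) simp_all
  also have "\<dots> = ennreal (a * s)"
  proof -
    have "Gamma (a + 1) * s powr (a + 1) / C = a * s"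
      proof -
        have "a \<notin> \<int>\<^sub>\<le>\<^sub>0" using a nonpos_Ints_nonpos by fastforce
        then have "Gamma (a + 1) = a * Gamma a" by (rule Gamma_plus1)
        moreover have "Gamma a > 0" using a by (rule Gamma_real_pos)
        ultimately show ?thesis using s by (simp add: powr_add C_def)
      qed
    then show ?thesis using C Gamma_real_pos[of "a+1"] a s by (simp add: ennreal_mult'[symmetric])
  qed
  finally show "(\<integral>\<^sup>+x. ennreal x \<partial>gamma_measure a s) = ennreal (a * s)" .
  show "AE x in gamma_measure a s. 0 < x"
    unfolding gamma_measure_def
    by (subst AE_density) (auto simp: gamma_density_def)
qed

lemma measurable_count_sum[measurable]:
  assumes [measurable]: "\<And>i. (\<lambda>x. f x i) \<in> borel_measurable M"
  shows "(\<lambda>x. \<integral>\<^sup>+i. f x (i::nat) \<partial>count_space UNIV) \<in> borel_measurable M"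
  by (simp add: nn_integral_count_space_nat)

lemma measurable_count_sum_pair[measurable]:
  assumes [measurable]: "\<And>p. (\<lambda>x. f x p) \<in> borel_measurable M"
  shows "(\<lambda>x. \<integral>\<^sup>+p. f x (p::nat \<times> nat) \<partial>count_space UNIV) \<in> borel_measurable M"
proof -
  have "(\<lambda>x. \<integral>\<^sup>+p. f x p \<partial>count_space UNIV) = (\<lambda>x. \<integral>\<^sup>+n. f x (prod_decode n) \<partial>count_space UNIV)"
    by (subst nn_integral_bij_count_space[OF bij_prod_decode]) simp
  also have "\<dots> \<in> borel_measurable M" by (rule measurable_count_sum) simp
  finally show ?thesis .
qed

lemma gamma_family_sum:
  fixes \<rho> :: "nat \<Rightarrow> real" and s :: real
  assumes pos: "\<forall>i. 0 < \<rho> i"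
    and fin: "(\<integral>\<^sup>+i. ennreal (\<rho> i) \<partial>count_space UNIV) < \<infinity>" and s: "0 < s"
  shows "AE \<theta> in PiM UNIV (\<lambda>i. gamma_measure (\<rho> i) s).
           (\<forall>i. 0 < \<theta> i) \<and> (\<integral>\<^sup>+i. ennreal (\<theta> i) \<partial>count_space UNIV) < \<infinity>"
proof -
  define M where "M = PiM UNIV (\<lambda>i. gamma_measure (\<rho> i) s)"
  have prob: "\<And>i. prob_space (gamma_measure (\<rho> i) s)"
    using gamma_moments(1) pos s by blast
  have comp: "(\<integral>\<^sup>+\<theta>. ennreal (\<theta> i) \<partial>M) = ennreal (\<rho> i * s)" for i
  proof -
    have "(\<integral>\<^sup>+\<theta>. ennreal (\<theta> i) \<partial>M) = (\<integral>\<^sup>+x. ennreal x \<partial>distr M (gamma_measure (\<rho> i) s) (\<lambda>\<theta>. \<theta> i))"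
      unfolding M_def by (subst nn_integral_distr) (auto intro: measurable_component_singleton)
    also have "distr M (gamma_measure (\<rho> i) s) (\<lambda>\<theta>. \<theta> i) = gamma_measure (\<rho> i) s"
      unfolding M_def by (rule distr_PiM_component) (auto intro: prob)
    finally show ?thesis using gamma_moments(2)[of "\<rho> i" s] pos s by simp
  qed
  have "(\<integral>\<^sup>+\<theta>. (\<integral>\<^sup>+i. ennreal (\<theta> i) \<partial>count_space UNIV) \<partial>M)
      = (\<integral>\<^sup>+i. (\<integral>\<^sup>+\<theta>. ennreal (\<theta> i) \<partial>M) \<partial>count_space UNIV)"
    unfolding M_def by (rule nn_integral_count_space_nn_integral) auto
  also have "\<dots> = (\<integral>\<^sup>+i. ennreal s * ennreal (\<rho> i) \<partial>count_space UNIV)"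
    using s pos by (simp add: comp ennreal_mult'[symmetric] mult.commute)
  also have "\<dots> = ennreal s * (\<integral>\<^sup>+i. ennreal (\<rho> i) \<partial>count_space UNIV)"
    by (rule nn_integral_cmult) auto
  also have "\<dots> < \<infinity>" using fin by (simp add: ennreal_mult_less_top)
  finally have "AE \<theta> in M. (\<integral>\<^sup>+i. ennreal (\<theta> i) \<partial>count_space UNIV) \<noteq> \<infinity>"
    by (intro nn_integral_PInf_AE) (auto simp: M_def)
  moreover have "AE \<theta> in M. \<forall>i. 0 < \<theta> i"
    unfolding M_def
    by (subst AE_all_countable, intro allI AE_PiM_component[OF prob])
       (use gamma_moments(3) pos s in auto)
  ultimately show ?thesis unfolding M_def by (auto simp: top.not_eq_extremum)
qed

lemma count_pair_integral:
  fixes f g :: "nat \<Rightarrow> ennreal"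
  shows "(\<integral>\<^sup>+p. f (fst p) * g (snd p) \<partial>count_space UNIV)
       = (\<integral>\<^sup>+i. f i \<partial>count_space UNIV) * (\<integral>\<^sup>+j. g j \<partial>count_space UNIV)"
proof -
  interpret S: sigma_finite_measure "count_space (UNIV :: nat set)"
    by (rule sigma_finite_measure_count_space)
  have C: "count_space (UNIV :: (nat \<times> nat) set) = count_space UNIV \<Otimes>\<^sub>M count_space UNIV"
    using pair_measure_countable[of "UNIV :: nat set" "UNIV :: nat set"] by simp
  have "(\<integral>\<^sup>+p. f (fst p) * g (snd p) \<partial>count_space UNIV)
      = (\<integral>\<^sup>+i. \<integral>\<^sup>+j. f i * g j \<partial>count_space UNIV \<partial>count_space UNIV)"
    unfolding C by (subst S.nn_integral_fst[symmetric]) (auto simp: C[symmetric])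
  also have "\<dots> = (\<integral>\<^sup>+i. f i * (\<integral>\<^sup>+j. g j \<partial>count_space UNIV) \<partial>count_space UNIV)"
    by (subst nn_integral_cmult) auto
  also have "\<dots> = (\<integral>\<^sup>+i. f i \<partial>count_space UNIV) * (\<integral>\<^sup>+j. g j \<partial>count_space UNIV)"
    by (subst nn_integral_multc) auto
  finally show ?thesis .
qed

lemma edges_finite:
  fixes \<theta> \<psi> :: "nat \<Rightarrow> real" and r :: real
  assumes t: "\<forall>i. 0 < \<theta> i" and p: "\<forall>j. 0 < \<psi> j"
    and ft: "(\<integral>\<^sup>+i. ennreal (\<theta> i) \<partial>count_space UNIV) < \<infinity>"
    and fp: "(\<integral>\<^sup>+i. ennreal (\<psi> i) \<partial>count_space UNIV) < \<infinity>"
    and r: "0 < r"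
  shows "AE z in PiM UNIV (\<lambda>(i, j). measure_pmf (bernoulli_pmf (1 - exp (- r * \<theta> i * \<psi> j)))).
           finite {(i :: nat, j :: nat). z (i, j)}"
proof -
  define q where "q p = 1 - exp (- r * \<theta> (fst p) * \<psi> (snd p))" for p :: "nat \<times> nat"
  define Mp where "Mp = (\<lambda>(i, j). measure_pmf (bernoulli_pmf (1 - exp (- r * \<theta> i * \<psi> j))))"
  have Mp: "Mp p = measure_pmf (bernoulli_pmf (q p))" for p
    unfolding Mp_def q_def by (cases p) auto
  define M where "M = PiM UNIV Mp"
  have prob: "\<And>p. prob_space (Mp p)" unfolding Mp by (rule prob_space_measure_pmf)
  have q01: "0 \<le> q p \<and> q p \<le> 1" for p
  proof -
    have "0 < r * \<theta> (fst p) * \<psi> (snd p)" using t p r by simp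
    then show ?thesis unfolding q_def by auto
  qed
  have qle: "q p \<le> r * \<theta> (fst p) * \<psi> (snd p)" for p
    unfolding q_def using exp_ge_add_one_self[of "- r * \<theta> (fst p) * \<psi> (snd p)"] by simp
  define h where "h z p = (if z p then 1 else 0 :: ennreal)" for z :: "nat \<times> nat \<Rightarrow> bool" and p
  have cm: "(\<lambda>z. z p) \<in> measurable M (Mp p)" for p
    unfolding M_def by (rule measurable_component_singleton) simp
  have hm[measurable]: "(\<lambda>z. h z p) \<in> borel_measurable M" for p
  proof -
    note cm
    moreover have "(\<lambda>b. if b then 1 else 0 :: ennreal) \<in> borel_measurable (Mp p)"
      unfolding Mp by simp
    ultimately show ?thesis unfolding h_def by (rule measurable_compose)
  qed
  have comp: "(\<integral>\<^sup>+z. h z p \<partial>M) = ennreal (q p)" for p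
  proof -
    have "(\<integral>\<^sup>+z. h z p \<partial>M) = (\<integral>\<^sup>+b. (if b then 1 else 0) \<partial>distr M (Mp p) (\<lambda>z. z p))"
      unfolding h_def by (subst nn_integral_distr[OF cm]) (auto simp: Mp)
    also have "distr M (Mp p) (\<lambda>z. z p) = Mp p"
      unfolding M_def by (rule distr_PiM_component) (auto intro: prob)
    finally show ?thesis
      using q01[of p] by (simp add: Mp nn_integral_measure_pmf nn_integral_count_space_finite UNIV_bool)
  qed
  have "(\<integral>\<^sup>+z. (\<integral>\<^sup>+p. h z p \<partial>count_space UNIV) \<partial>M)
      = (\<integral>\<^sup>+p. (\<integral>\<^sup>+z. h z p \<partial>M) \<partial>count_space UNIV)"
    by (rule nn_integral_count_space_nn_integral) auto
  also have "\<dots> \<le> (\<integral>\<^sup>+p. (ennreal r * ennreal (\<theta> (fst p))) * ennreal (\<psi> (snd p)) \<partial>count_space UNIV)"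
    unfolding comp using t p r qle
  proof (intro nn_integral_mono)
    fix x :: "nat \<times> nat"
    have "0 \<le> r * \<theta> (fst x)" using r t by (simp add: less_imp_le)
    then have "ennreal (r * \<theta> (fst x)) * ennreal (\<psi> (snd x)) = ennreal (r * \<theta> (fst x) * \<psi> (snd x))"
      using p by (simp add: ennreal_mult' less_imp_le)
    moreover have "ennreal r * ennreal (\<theta> (fst x)) = ennreal (r * \<theta> (fst x))"
      using r t by (simp add: ennreal_mult' less_imp_le)
    ultimately show "ennreal (q x) \<le> ennreal r * ennreal (\<theta> (fst x)) * ennreal (\<psi> (snd x))"
      using qle[of x] by (simp add: ennreal_leI)
  qed
  also have "\<dots> = (\<integral>\<^sup>+i. ennreal r * ennreal (\<theta> i) \<partial>count_space UNIV) * (\<integral>\<^sup>+j. ennreal (\<psi> j) \<partial>count_space UNIV)"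
    by (rule count_pair_integral)
  also have "\<dots> = ennreal r * (\<integral>\<^sup>+i. ennreal (\<theta> i) \<partial>count_space UNIV) * (\<integral>\<^sup>+j. ennreal (\<psi> j) \<partial>count_space UNIV)"
    by (subst nn_integral_cmult) auto
  also have "\<dots> < \<infinity>" using ft fp by (simp add: ennreal_mult_less_top)
  finally have "AE z in M. (\<integral>\<^sup>+p. h z p \<partial>count_space UNIV) \<noteq> \<infinity>"
    by (intro nn_integral_PInf_AE) (auto simp: top.not_eq_extremum)
  then have "AE z in M. finite {p. z p}"
  proof (rule eventually_mono)
    fix z assume "(\<integral>\<^sup>+p. h z p \<partial>count_space UNIV) \<noteq> \<infinity>"
    moreover have "(\<integral>\<^sup>+p. h z p \<partial>count_space UNIV) = emeasure (count_space UNIV) {p. z p}"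
    proof -
      have "(\<integral>\<^sup>+p. h z p \<partial>count_space UNIV) = (\<integral>\<^sup>+p. indicator {p. z p} p \<partial>count_space UNIV)"
        by (auto simp: h_def indicator_def intro!: nn_integral_cong)
      also have "\<dots> = emeasure (count_space UNIV) {p. z p}"
        by (rule nn_integral_indicator) simp
      finally show ?thesis .
    qed
    ultimately show "finite {p. z p}" by (auto simp: emeasure_count_space split: if_splits)
  qed
  then show ?thesis unfolding M_def Mp_def by (simp add: case_prod_eta)
qed

lemma poisson_sums:
  fixes l :: real assumes "0 \<le> l"
  shows "(\<lambda>m. poisson_prob l m) sums 1"
    and "(\<lambda>m. real m * poisson_prob l m) sums l"
proof -
  have e: "(\<lambda>n. l ^ n / fact n) sums exp l"
    using exp_converges[of l] by (simp add: divide_inverse mult.commute)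
  have "(\<lambda>n. l ^ n / fact n * exp (- l)) sums (exp l * exp (- l))"
    by (rule sums_mult2[OF e])
  then show s1: "(\<lambda>m. poisson_prob l m) sums 1"
    by (simp add: poisson_prob_def exp_minus)
  have "(\<lambda>n. l * poisson_prob l n) sums (l * 1)" by (rule sums_mult[OF s1])
  moreover have "real (Suc n) * poisson_prob l (Suc n) = l * poisson_prob l n" for n
  proof -
    have f: "(fact (Suc n) :: real) = real (Suc n) * fact n" by simp
    have p: "(0::real) < fact n" by simp
    have "real (Suc n) * (l ^ Suc n / (real (Suc n) * fact n)) = l ^ Suc n / fact n"
      using mult_divide_mult_cancel_left[of "real (Suc n)" "l ^ Suc n" "fact n"] by simp
    then show ?thesis unfolding poisson_prob_def f by (simp add: mult.assoc)
  qed
  ultimately have "(\<lambda>n. real (Suc n) * poisson_prob l (Suc n)) sums l" by simp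
  then show "(\<lambda>m. real m * poisson_prob l m) sums l"
    by (subst (asm) sums_Suc_iff) simp
qed

lemma poisson_prob_nonneg: "0 \<le> l \<Longrightarrow> 0 \<le> poisson_prob l m"
  by (simp add: poisson_prob_def)

lemma poisson_count:
  fixes \<nu> :: "real set \<Rightarrow> ennreal" and P :: "(nat \<Rightarrow> real) measure"
  assumes PL: "poisson_process_law \<nu> P"
    and A[measurable]: "A \<in> sets borel" and A0: "A \<subseteq> {0<..}" and Afin: "\<nu> A < \<infinity>"
  shows "AE \<rho> in P. finite {i. \<rho> i \<in> A}"
    and "(\<integral>\<^sup>+\<rho>. (\<integral>\<^sup>+i. indicator A (\<rho> i) \<partial>count_space UNIV) \<partial>P) = \<nu> A"
proof -
  have prob: "prob_space P" and sP: "sets P = sets (PiM UNIV (\<lambda>_. borel))"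
    and H: "\<And>n (B :: nat \<Rightarrow> real set) (m :: nat \<Rightarrow> nat).
        (\<forall>k<n. B k \<in> sets borel \<and> B k \<subseteq> {0<..} \<and> \<nu> (B k) < \<infinity>) \<Longrightarrow>
        disjoint_family_on B {..<n} \<Longrightarrow>
        measure P {\<rho> \<in> space P. \<forall>k<n. finite {i. \<rho> i \<in> B k} \<and> card {i. \<rho> i \<in> B k} = m k}
          = (\<Prod>k<n. poisson_prob (enn2real (\<nu> (B k))) (m k))"
    using PL unfolding poisson_process_law_def by blast+
  interpret prob_space P by (rule prob)
  define N where "N \<rho> = (\<integral>\<^sup>+i. indicator A (\<rho> i) \<partial>count_space UNIV)" for \<rho> :: "nat \<Rightarrow> real"
  have Neq: "N \<rho> = (if finite {i. \<rho> i \<in> A} then of_nat (card {i. \<rho> i \<in> A}) else \<infinity>)" for \<rho>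
  proof -
    have "N \<rho> = (\<integral>\<^sup>+i. indicator {i. \<rho> i \<in> A} i \<partial>count_space UNIV)"
      unfolding N_def by (auto simp: indicator_def intro!: nn_integral_cong)
    also have "\<dots> = emeasure (count_space UNIV) {i. \<rho> i \<in> A}"
      by (rule nn_integral_indicator) simp
    finally show ?thesis by (simp add: emeasure_count_space)
  qed
  have Nm[measurable]: "N \<in> borel_measurable P"
  proof -
    have "N \<in> borel_measurable (PiM UNIV (\<lambda>_::nat. borel :: real measure))"
      unfolding N_def by measurable
    then show ?thesis unfolding measurable_cong_sets[OF sP refl] .
  qed
  define l where "l = enn2real (\<nu> A)"
  have l0: "0 \<le> l" unfolding l_def by simp
  have nuA: "\<nu> A = ennreal l" unfolding l_def using Afin by (simp add: less_top)
  define S where "S m = {\<rho> \<in> space P. N \<rho> = of_nat m}" for m :: nat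
  have Sm[measurable]: "S m \<in> sets P" for m unfolding S_def by measurable
  have Sprob: "emeasure P (S m) = ennreal (poisson_prob l m)" for m
  proof -
    have "S m = {\<rho> \<in> space P. \<forall>k::nat<1. finite {i. \<rho> i \<in> (\<lambda>_. A) k} \<and> card {i. \<rho> i \<in> (\<lambda>_. A) k} = (\<lambda>_. m) k}"
      unfolding S_def Neq by auto
    then have "measure P (S m) = (\<Prod>k::nat<1. poisson_prob (enn2real (\<nu> ((\<lambda>_. A) k))) ((\<lambda>_. m) k))"
      using H[of 1 "\<lambda>_. A" "\<lambda>_. m"] A A0 Afin by (simp add: disjoint_family_on_def)
    then show ?thesis by (simp add: emeasure_eq_measure l_def)
  qed
  have disj: "disjoint_family S" unfolding disjoint_family_on_def S_def by auto
  have "emeasure P (\<Union>m. S m) = (\<Sum>m. emeasure P (S m))"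
    by (rule suminf_emeasure[symmetric]) (use disj in auto)
  also have "\<dots> = ennreal (\<Sum>m. poisson_prob l m)"
    unfolding Sprob using poisson_sums(1)[OF l0] poisson_prob_nonneg[OF l0]
    by (intro suminf_ennreal2) (auto simp: sums_iff)
  also have "\<dots> = 1" using poisson_sums(1)[OF l0] by (simp add: sums_iff)
  finally have U1: "emeasure P (\<Union>m. S m) = 1" .
  have Ueq: "(\<Union>m. S m) = {\<rho> \<in> space P. N \<rho> \<noteq> \<infinity>}"
    unfolding S_def Neq by auto
  have AEfin: "AE \<rho> in P. N \<rho> \<noteq> \<infinity>"
    by (rule AE_I_eq_1) (use U1 Ueq in auto)
  then show "AE \<rho> in P. finite {i. \<rho> i \<in> A}"
    by (rule eventually_mono) (simp add: Neq split: if_splits)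
  have "AE \<rho> in P. N \<rho> = (\<Sum>m. of_nat m * indicator (S m) \<rho>)"
    using AEfin
  proof (rule AE_mp[OF _ AE_I2[OF impI]])
    fix \<rho> assume \<rho>: "\<rho> \<in> space P" "N \<rho> \<noteq> \<infinity>"
    then obtain k where k: "N \<rho> = of_nat k" by (auto simp: Neq split: if_splits)
    have "(\<lambda>m. of_nat m * indicator (S m) \<rho> :: ennreal) = (\<lambda>m. if m = k then of_nat k else 0)"
      using \<rho> k by (auto simp: S_def indicator_def fun_eq_iff)
    then show "N \<rho> = (\<Sum>m. of_nat m * indicator (S m) \<rho>)"
      using sums_single[of k "\<lambda>_. of_nat k :: ennreal"] k by (simp add: sums_iff)
  qed
  then have "(\<integral>\<^sup>+\<rho>. N \<rho> \<partial>P) = (\<integral>\<^sup>+\<rho>. (\<Sum>m. of_nat m * indicator (S m) \<rho>) \<partial>P)"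
    by (rule nn_integral_cong_AE)
  also have "\<dots> = (\<Sum>m. (\<integral>\<^sup>+\<rho>. of_nat m * indicator (S m) \<rho> \<partial>P))"
    by (rule nn_integral_suminf) measurable
  also have "\<dots> = (\<Sum>m. ennreal (real m * poisson_prob l m))"
    by (simp add: nn_integral_cmult_indicator Sprob ennreal_mult' ennreal_of_nat_eq_real_of_nat)
  also have "\<dots> = ennreal l"
    using poisson_sums(2)[OF l0] poisson_prob_nonneg[OF l0]
    by (subst suminf_ennreal2) (auto simp: sums_iff)
  finally show "(\<integral>\<^sup>+\<rho>. (\<integral>\<^sup>+i. indicator A (\<rho> i) \<partial>count_space UNIV) \<partial>P) = \<nu> A"
    unfolding N_def nuA .
qed

lemma dyadic_exists:
  fixes x :: real assumes "0 < x" "x \<le> 1"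
  shows "\<exists>k. 1 / 2 ^ Suc k < x \<and> x \<le> 1 / 2 ^ k"
proof -
  have ex: "\<exists>n. (1/2::real) ^ n < x" using real_arch_pow_inv[of x "1/2"] assms by auto
  define n where "n = (LEAST n. (1/2::real) ^ n < x)"
  have n: "(1/2::real) ^ n < x" unfolding n_def by (rule LeastI_ex[OF ex])
  have n0: "n \<noteq> 0"
  proof
    assume "n = 0" then show False using n assms by simp
  qed
  then obtain k where k: "n = Suc k" by (cases n) auto
  have "\<not> (1/2::real) ^ k < x" using not_less_Least[of k "\<lambda>n. (1/2::real) ^ n < x"] k n_def by simp
  then show ?thesis using n k by (intro exI[of _ k]) (simp add: power_one_over)
qed

lemma levy_L:
  fixes g0 c :: real assumes g0: "0 < g0" and c: "0 < c"
  shows "gamma_levy_intensity g0 c {1 / 2 ^ Suc k <.. 1 / 2 ^ k} \<le> ennreal g0"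
proof -
  define L where "L = {1 / 2 ^ Suc k <.. 1 / (2::real) ^ k}"
  have "gamma_levy_intensity g0 c L \<le> (\<integral>\<^sup>+x. ennreal (g0 * 2 ^ Suc k) * indicator L x \<partial>lborel)"
    unfolding gamma_levy_intensity_def
  proof (intro nn_integral_mono)
    fix x :: real
    show "ennreal (if 0 < x then g0 / x * exp (- c * x) else 0) * indicator L x \<le> ennreal (g0 * 2 ^ Suc k) * indicator L x"
    proof (cases "x \<in> L")
      case True
      then have x: "1 / 2 ^ Suc k < x" unfolding L_def by simp
      have xp: "0 < x" using x by (smt (verit) divide_pos_pos zero_less_power)
      have "1 / x \<le> 2 ^ Suc k" using x xp
        by (simp add: divide_less_eq field_simps)
      then have "g0 / x \<le> g0 * 2 ^ Suc k" using g0 by (simp add: divide_inverse mult_left_mono)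
      moreover have "exp (- c * x) \<le> 1" using c xp by simp
      moreover have "0 \<le> g0 / x" using g0 xp by simp
      ultimately have "g0 / x * exp (- c * x) \<le> g0 * 2 ^ Suc k"
        by (smt (verit) mult_left_le exp_gt_zero)
      then show ?thesis using True xp by (simp add: ennreal_leI)
    qed simp
  qed
  also have "\<dots> = ennreal (g0 * 2 ^ Suc k) * ennreal (1 / 2 ^ k - 1 / 2 ^ Suc k)"
    unfolding L_def by (subst nn_integral_cmult_indicator) (auto simp: field_simps)
  also have "\<dots> = ennreal g0"
  proof -
    have "(g0 * 2 ^ Suc k) * (1 / 2 ^ k - 1 / 2 ^ Suc k) = (g0::real)" by (simp add: field_simps)
    moreover have "0 \<le> 1 / 2 ^ k - 1 / (2::real) ^ Suc k" by (simp add: field_simps)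
    ultimately show ?thesis using g0 by (simp add: ennreal_mult'[symmetric] del: power_Suc)
  qed
  finally show ?thesis unfolding L_def by simp
qed

lemma levy_U:
  fixes g0 c :: real assumes g0: "0 < g0" and c: "0 < c"
  shows "gamma_levy_intensity g0 c {1<..} < \<infinity>"
proof -
  have "gamma_levy_intensity g0 c {1<..} \<le> (\<integral>\<^sup>+x. ennreal (g0 / c) * ennreal (exponential_density c x) \<partial>lborel)"
    unfolding gamma_levy_intensity_def
  proof (intro nn_integral_mono)
    fix x :: real
    show "ennreal (if 0 < x then g0 / x * exp (- c * x) else 0) * indicator {1<..} x \<le> ennreal (g0 / c) * ennreal (exponential_density c x)"
    proof (cases "1 < x")
      case True
      have "g0 / x * exp (- c * x) \<le> g0 * exp (- c * x)"
        using True g0 by (simp add: divide_le_eq mult_le_cancel_right1 less_imp_le)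
      also have "\<dots> = (g0 / c) * exponential_density c x"
        using True c by (simp add: exponential_density_def mult.commute)
      finally show ?thesis using True g0 c
        by (simp add: ennreal_mult'[symmetric] ennreal_leI exponential_density_nonneg)
    qed simp
  qed
  also have "\<dots> = ennreal (g0 / c) * (\<integral>\<^sup>+x. ennreal (exponential_density c x) \<partial>lborel)"
    by (rule nn_integral_cmult) (simp add: exponential_density_def)
  also have "(\<integral>\<^sup>+x. ennreal (exponential_density c x) \<partial>lborel) = 1"
  proof -
    interpret E: prob_space "density lborel (exponential_density c)"
      by (rule prob_space_exponential_density[OF c])
    have "emeasure (density lborel (exponential_density c)) UNIV = 1"
      using E.emeasure_space_1 by simp
    then show ?thesis by (simp add: emeasure_density exponential_density_def)
  qed
  finally show ?thesis by (rule le_less_trans) simp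
qed

lemma count_measurable:
  assumes sP: "sets P = sets (PiM UNIV (\<lambda>_::nat. borel :: real measure))" and A[measurable]: "A \<in> sets borel"
  shows "(\<lambda>\<rho>. \<integral>\<^sup>+i. indicator A (\<rho> i) \<partial>count_space UNIV) \<in> borel_measurable P"
proof -
  have "(\<lambda>\<rho>. \<integral>\<^sup>+i. indicator A (\<rho> i) \<partial>count_space UNIV) \<in> borel_measurable (PiM UNIV (\<lambda>_::nat. borel :: real measure))"
    by measurable
  then show ?thesis unfolding measurable_cong_sets[OF sP refl] .
qed

lemma gamma_process_sum:
  fixes g0 c :: real and P :: "(nat \<Rightarrow> real) measure"
  assumes g0: "0 < g0" and c: "0 < c" and GP: "gamma_process_law g0 c P"
  shows "AE \<rho> in P. (\<forall>i. 0 < \<rho> i) \<and> (\<integral>\<^sup>+i. ennreal (\<rho> i) \<partial>count_space UNIV) < \<infinity>"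
proof -
  define \<nu> where "\<nu> = gamma_levy_intensity g0 c"
  have PL: "poisson_process_law \<nu> P" using GP unfolding gamma_process_law_def \<nu>_def .
  have sP: "sets P = sets (PiM UNIV (\<lambda>_. borel))" and pos: "AE \<rho> in P. inj \<rho> \<and> (\<forall>i. 0 < \<rho> i)"
    using PL unfolding poisson_process_law_def by blast+
  define L where "L k = {1 / 2 ^ Suc k <.. 1 / (2::real) ^ k}" for k :: nat
  define U where "U = {1::real<..}"
  define N where "N A \<rho> = (\<integral>\<^sup>+i. indicator A (\<rho> i) \<partial>count_space UNIV)" for A and \<rho> :: "nat \<Rightarrow> real"
  have Lb[measurable]: "L k \<in> sets borel" for k unfolding L_def by simp
  have L0: "L k \<subseteq> {0<..}" for k unfolding L_def by (auto intro: less_trans[rotated])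
  have nuL: "\<nu> (L k) \<le> ennreal g0" for k unfolding L_def \<nu>_def by (rule levy_L[OF g0 c])
  have nuLfin: "\<nu> (L k) < \<infinity>" for k using nuL[of k] by (rule le_less_trans) simp
  have NL: "(\<integral>\<^sup>+\<rho>. N (L k) \<rho> \<partial>P) = \<nu> (L k)" for k
    unfolding N_def by (rule poisson_count(2)[OF PL Lb L0 nuLfin])
  have NLm[measurable]: "N (L k) \<in> borel_measurable P" for k
    unfolding N_def by (rule count_measurable[OF sP Lb])
  have Ufin: "AE \<rho> in P. finite {i. \<rho> i \<in> U}"
    by (rule poisson_count(1)[OF PL]) (use levy_U[OF g0 c] in \<open>auto simp: U_def \<nu>_def\<close>)
  define W where "W \<rho> = (\<integral>\<^sup>+k. ennreal ((1/2) ^ k) * N (L k) \<rho> \<partial>count_space UNIV)" for \<rho>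
  have "(\<integral>\<^sup>+\<rho>. W \<rho> \<partial>P) = (\<integral>\<^sup>+k. (\<integral>\<^sup>+\<rho>. ennreal ((1/2) ^ k) * N (L k) \<rho> \<partial>P) \<partial>count_space UNIV)"
    unfolding W_def by (rule nn_integral_count_space_nn_integral) auto
  also have "\<dots> = (\<integral>\<^sup>+k. ennreal ((1/2) ^ k) * \<nu> (L k) \<partial>count_space UNIV)"
    by (simp add: nn_integral_cmult NL)
  also have "\<dots> \<le> (\<integral>\<^sup>+k. ennreal ((1/2) ^ k * g0) \<partial>count_space UNIV)"
    by (intro nn_integral_mono) (simp add: ennreal_mult' g0 less_imp_le mult_left_mono nuL)
  also have "\<dots> = ennreal (\<Sum>k. (1/2) ^ k * g0)"
    unfolding nn_integral_count_space_nat
    by (rule suminf_ennreal2) (use g0 in \<open>auto intro!: summable_mult2 simp: summable_geometric\<close>)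
  also have "\<dots> < \<infinity>" by simp
  finally have "AE \<rho> in P. W \<rho> \<noteq> \<infinity>"
    by (intro nn_integral_PInf_AE) (auto simp: W_def)
  with Ufin pos show ?thesis
  proof (eventually_elim)
    case (elim \<rho>)
    then have rp: "\<forall>i. 0 < \<rho> i" and fU: "finite {i. \<rho> i \<in> U}" and W: "W \<rho> \<noteq> \<infinity>" by auto
    have pt: "ennreal (\<rho> i) \<le> (\<integral>\<^sup>+k. ennreal ((1/2) ^ k) * indicator (L k) (\<rho> i) \<partial>count_space UNIV)
               + ennreal (\<rho> i) * indicator U (\<rho> i)" for i
    proof (cases "\<rho> i \<in> U")
      case True then show ?thesis by (simp add: add_increasing)
    next
      case False
      then have "0 < \<rho> i" "\<rho> i \<le> 1" using rp by (auto simp: U_def)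
      then obtain k where k: "\<rho> i \<in> L k" using dyadic_exists[of "\<rho> i"] by (auto simp: L_def)
      then have "\<rho> i \<le> (1/2) ^ k" by (simp add: L_def power_one_over)
      then have "ennreal (\<rho> i) \<le> ennreal ((1/2) ^ k) * indicator (L k) (\<rho> i)"
        using k by (simp add: ennreal_leI)
      also have "\<dots> = (\<integral>\<^sup>+k'. ennreal ((1/2) ^ k') * indicator (L k') (\<rho> i) * indicator {k} k' \<partial>count_space UNIV)"
        by (subst nn_integral_count_space'[of "{k}"]) (use k in auto)
      also have "\<dots> \<le> (\<integral>\<^sup>+k'. ennreal ((1/2) ^ k') * indicator (L k') (\<rho> i) \<partial>count_space UNIV)"
        by (intro nn_integral_mono) (auto simp: indicator_def)
      finally show ?thesis by (simp add: add_increasing2)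
    qed
    have "(\<integral>\<^sup>+i. ennreal (\<rho> i) \<partial>count_space UNIV)
        \<le> (\<integral>\<^sup>+i. (\<integral>\<^sup>+k. ennreal ((1/2) ^ k) * indicator (L k) (\<rho> i) \<partial>count_space UNIV)
               + ennreal (\<rho> i) * indicator U (\<rho> i) \<partial>count_space UNIV)"
      by (intro nn_integral_mono pt)
    also have "\<dots> = (\<integral>\<^sup>+i. (\<integral>\<^sup>+k. ennreal ((1/2) ^ k) * indicator (L k) (\<rho> i) \<partial>count_space UNIV) \<partial>count_space UNIV)
               + (\<integral>\<^sup>+i. ennreal (\<rho> i) * indicator U (\<rho> i) \<partial>count_space UNIV)"
      by (rule nn_integral_add) auto
    also have "(\<integral>\<^sup>+i. (\<integral>\<^sup>+k. ennreal ((1/2) ^ k) * indicator (L k) (\<rho> i) \<partial>count_space UNIV) \<partial>count_space UNIV)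
        = (\<integral>\<^sup>+k. (\<integral>\<^sup>+i. ennreal ((1/2) ^ k) * indicator (L k) (\<rho> i) \<partial>count_space UNIV) \<partial>count_space UNIV)"
      by (rule nn_integral_count_space_nn_integral) auto
    also have "\<dots> = W \<rho>"
      unfolding W_def N_def by (simp add: nn_integral_cmult)
    also have "(\<integral>\<^sup>+i. ennreal (\<rho> i) * indicator U (\<rho> i) \<partial>count_space UNIV)
        = (\<Sum>i\<in>{i. \<rho> i \<in> U}. ennreal (\<rho> i) * indicator U (\<rho> i))"
      by (rule nn_integral_count_space'[OF fU]) auto
    also have "W \<rho> + \<dots> < \<infinity>"
      using W by (simp add: top.not_eq_extremum ennreal_mult_less_top fU)
    finally show ?case using rp by simp
  qed
qed

lemma distr_pair_snd':
  assumes "prob_space N" and "prob_space M"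
  shows "distr (N \<Otimes>\<^sub>M M) M snd = M"
proof (intro measure_eqI)
  interpret prob_space N by fact
  interpret M: prob_space M by fact
  fix A assume A: "A \<in> sets (distr (N \<Otimes>\<^sub>M M) M snd)"
  from A have "emeasure (distr (N \<Otimes>\<^sub>M M) M snd) A = emeasure (N \<Otimes>\<^sub>M M) (space N \<times> A)"
    by (auto simp add: emeasure_distr space_pair_measure dest: sets.sets_into_space intro!: arg_cong2[where f=emeasure])
  with A show "emeasure (distr (N \<Otimes>\<^sub>M M) M snd) A = emeasure M A"
    by (simp add: M.emeasure_pair_measure_Times emeasure_space_1)
qed simp

theorem lemma1:
  fixes g\<rho> c\<rho> g\<tau> c\<tau> e f r :: real
    and P\<rho> P\<tau> :: "(nat \<Rightarrow> real) measure"
  assumes "0 < g\<rho>" "0 < c\<rho>" "0 < g\<tau>" "0 < c\<tau>" "0 < e" "0 < f" "0 < r"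
    and "gamma_process_law g\<rho> c\<rho> P\<rho>"
    and "gamma_process_law g\<tau> c\<tau> P\<tau>"
  shows "AE \<rho>\<tau> in P\<rho> \<Otimes>\<^sub>M P\<tau>.
           AE \<theta> in PiM UNIV (\<lambda>i. gamma_measure (fst \<rho>\<tau> i) (1 / e)).
             AE \<psi> in PiM UNIV (\<lambda>j. gamma_measure (snd \<rho>\<tau> j) (1 / f)).
               AE z in PiM UNIV (\<lambda>(i, j). measure_pmf (bernoulli_pmf (1 - exp (- r * \<theta> i * \<psi> j)))).
                 finite {(i :: nat, j :: nat). z (i, j)}"
proof -
  define G where "G \<rho> \<longleftrightarrow> (\<forall>i. 0 < \<rho> i) \<and> (\<integral>\<^sup>+i. ennreal (\<rho> i) \<partial>count_space UNIV) < \<infinity>"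
    for \<rho> :: "nat \<Rightarrow> real"
  have A1: "AE \<rho> in P\<rho>. G \<rho>" unfolding G_def by (rule gamma_process_sum) (use assms in auto)
  have A2: "AE \<tau> in P\<tau>. G \<tau>" unfolding G_def by (rule gamma_process_sum) (use assms in auto)
  have p1: "prob_space P\<rho>" using assms(8) unfolding gamma_process_law_def poisson_process_law_def by blast
  have p2: "prob_space P\<tau>" using assms(9) unfolding gamma_process_law_def poisson_process_law_def by blast
  have B1: "AE p in P\<rho> \<Otimes>\<^sub>M P\<tau>. G (fst p)"
    by (rule AE_distrD[OF measurable_fst]) (subst prob_space.distr_pair_fst[OF p2], rule A1)
  have B2: "AE p in P\<rho> \<Otimes>\<^sub>M P\<tau>. G (snd p)"
    by (rule AE_distrD[OF measurable_snd]) (subst distr_pair_snd'[OF p1 p2], rule A2)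
  from B1 B2 show ?thesis
  proof (eventually_elim)
    case (elim p)
    have "AE \<theta> in PiM UNIV (\<lambda>i. gamma_measure (fst p i) (1 / e)). G \<theta>"
      unfolding G_def by (rule gamma_family_sum) (use elim assms in \<open>auto simp: G_def\<close>)
    then show ?case
    proof (rule eventually_mono)
      fix \<theta> assume t: "G \<theta>"
      have "AE \<psi> in PiM UNIV (\<lambda>i. gamma_measure (snd p i) (1 / f)). G \<psi>"
        unfolding G_def by (rule gamma_family_sum) (use elim assms in \<open>auto simp: G_def\<close>)
      then show "AE \<psi> in PiM UNIV (\<lambda>j. gamma_measure (snd p j) (1 / f)).
               AE z in PiM UNIV (\<lambda>(i, j). measure_pmf (bernoulli_pmf (1 - exp (- r * \<theta> i * \<psi> j)))).
                 finite {(i :: nat, j :: nat). z (i, j)}"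
      proof (rule eventually_mono)
        fix \<psi> assume s: "G \<psi>"
        show "AE z in PiM UNIV (\<lambda>(i, j). measure_pmf (bernoulli_pmf (1 - exp (- r * \<theta> i * \<psi> j)))).
                 finite {(i :: nat, j :: nat). z (i, j)}"
          by (rule edges_finite) (use t s assms in \<open>auto simp: G_def\<close>)
      qed
    qed
  qed
qed

end
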